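(* Let $n=2r+1$, $\mathcal D=\mathbb F_q^{2d+1}$ with a non-degenerate symmetric bilinear form $Q$, let $\mathcal D''\subseteq\mathcal D$ be an isotropic subspace of dimension $s$, and let $L=(L_i)_{0\le i\le n}$ be an $n$-step flag $0=L_0\subseteq L_1\subseteq\cdots\subseteq L_n=\mathcal D$ with $L_i=L_j^\perp$ whenever $i+j=n$. Then there exist subspaces $T,W\subseteq\mathcal D$ such that: (a) $\mathcal D=\mathcal D''\oplus T\oplus W$ and $(\mathcal D'')^\perp=\mathcal D''\oplus T$; (b) $W$ is isotropic and $T\perp W$; (c) there are bases $\{z_1,\dots,z_s\}$ of $\mathcal D''$ and $\{w_1,\dots,w_s\}$ of $W$ with $Q(z_i,w_j)=\delta_{ij}$; (d) $L_i=(L_i\cap\mathcal D'')\oplus(L_i\cap T)\oplus(L_i\cap W)$ for all $1\le i\le n-1$.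
   Context: $q$ is a power of an odd prime. $W^\perp$ denotes the orthogonal complement with respect to $Q$; a subspace $W$ is isotropic if $W\subseteq W^\perp$. *)

theory Defs
  imports "HOL-Analysis.Analysis"
begin

text \<open>Vectors of the space D = F_q^(2d+1) are modelled as elements of 'a ^ 'n,
  where 'a is a finite field and 'n a finite index type; vector-space notions
  (subspace, span, independence, dim) are those of the library interpretation vec.\<close>

definition bilinear_form :: "('a::field ^ 'n \<Rightarrow> 'a ^ 'n \<Rightarrow> 'a) \<Rightarrow> bool" where
  "bilinear_form Q \<longleftrightarrow>
     (\<forall>x y z. Q (x + y) z = Q x z + Q y z) \<and>
     (\<forall>c x y. Q (c *s x) y = c * Q x y) \<and>
     (\<forall>x y z. Q x (y + z) = Q x y + Q x z) \<and>
     (\<forall>c x y. Q x (c *s y) = c * Q x y)"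

definition symmetric_form :: "('v \<Rightarrow> 'v \<Rightarrow> 'a) \<Rightarrow> bool" where
  "symmetric_form Q \<longleftrightarrow> (\<forall>x y. Q x y = Q y x)"

definition nondegenerate_form :: "('a::field ^ 'n \<Rightarrow> 'a ^ 'n \<Rightarrow> 'a) \<Rightarrow> bool" where
  "nondegenerate_form Q \<longleftrightarrow> (\<forall>x. (\<forall>y. Q x y = 0) \<longrightarrow> x = 0)"

definition orth_compl :: "('v \<Rightarrow> 'v \<Rightarrow> 'a::zero) \<Rightarrow> 'v set \<Rightarrow> 'v set" where
  "orth_compl Q W = {x. \<forall>y\<in>W. Q x y = 0}"

definition isotropic :: "('v \<Rightarrow> 'v \<Rightarrow> 'a::zero) \<Rightarrow> 'v set \<Rightarrow> bool" where
  "isotropic Q W \<longleftrightarrow> W \<subseteq> orth_compl Q W"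

definition orthogonal_sets :: "('v \<Rightarrow> 'v \<Rightarrow> 'a::zero) \<Rightarrow> 'v set \<Rightarrow> 'v set \<Rightarrow> bool" where
  "orthogonal_sets Q A B \<longleftrightarrow> (\<forall>a\<in>A. \<forall>b\<in>B. Q a b = 0)"

definition direct_sum2 :: "'v::ab_group_add set \<Rightarrow> 'v set \<Rightarrow> 'v set \<Rightarrow> bool" where
  "direct_sum2 S A B \<longleftrightarrow> A \<subseteq> S \<and> B \<subseteq> S \<and>
     (\<forall>v\<in>S. \<exists>!p. fst p \<in> A \<and> snd p \<in> B \<and> v = fst p + snd p)"

definition direct_sum3 :: "'v::ab_group_add set \<Rightarrow> 'v set \<Rightarrow> 'v set \<Rightarrow> 'v set \<Rightarrow> bool" where
  "direct_sum3 S A B C \<longleftrightarrow> A \<subseteq> S \<and> B \<subseteq> S \<and> C \<subseteq> S \<and>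
     (\<forall>v\<in>S. \<exists>!(a, b, c). a \<in> A \<and> b \<in> B \<and> c \<in> C \<and> v = a + b + c)"

end

theory Submission
  imports Defs
begin

lemma even_card_invol:
  assumes "finite S" "\<forall>x\<in>S. f x \<in> S \<and> f x \<noteq> x \<and> f (f x) = x"
  shows "even (card S)"
  using assms
proof (induction "card S" arbitrary: S rule: less_induct)
  case less
  show ?case
  proof (cases "S = {}")
    case True then show ?thesis by simp
  next
    case False
    then obtain x where x: "x \<in> S" by blast
    let ?S' = "S - {x, f x}"
    have fx: "f x \<in> S" "f x \<noteq> x" using less.prems x by auto
    have c: "card S = card ?S' + 2"
    proof -
      have sub: "{x, f x} \<subseteq> S" using x fx by simp
      have "card ?S' = card S - card {x, f x}"
        using less.prems(1) sub by (simp add: card_Diff_subset finite_subset)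
      moreover have "card {x, f x} = 2" using fx by simp
      moreover have "card {x, f x} \<le> card S" using less.prems(1) sub by (rule card_mono)
      ultimately show ?thesis by linarith
    qed
    have "even (card ?S')"
    proof (rule less.hyps)
      show "card ?S' < card S" using c by simp
      show "finite ?S'" using less.prems by simp
      show "\<forall>y\<in>?S'. f y \<in> ?S' \<and> f y \<noteq> y \<and> f (f y) = y"
      proof
        fix y assume y: "y \<in> ?S'"
        have p: "f y \<in> S" "f y \<noteq> y" "f (f y) = y" "f (f x) = x" using less.prems(2) x y by auto
        have "f y \<noteq> x" using p y by auto
        moreover have "f y \<noteq> f x"
        proof
          assume "f y = f x"
          then have "f (f y) = f (f x)" by simp
          then have "y = x" using p by simp
          then show False using y by simp
        qed
        ultimately show "f y \<in> ?S' \<and> f y \<noteq> y \<and> f (f y) = y" using p by auto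
      qed
    qed
    then show ?thesis using c by simp
  qed
qed

lemma two_ne0:
  assumes "odd CARD('a::{field,finite})" shows "(2::'a) \<noteq> 0"
proof
  assume h: "(2::'a) = 0"
  have "even (card (UNIV::'a set))"
  proof (rule even_card_invol[where f="\<lambda>x. x + 1"])
    show "\<forall>x\<in>(UNIV::'a set). x + 1 \<in> UNIV \<and> x + 1 \<noteq> x \<and> x + 1 + 1 = x"
    proof
      fix x :: 'a
      have "x + 1 + 1 = x + 2" by (simp add: add.assoc)
      also have "\<dots> = x" using h by simp
      finally show "x + 1 \<in> UNIV \<and> x + 1 \<noteq> x \<and> x + 1 + 1 = x" by simp
    qed
  qed simp
  then show False using assms by simp
qed

context fixes Q :: "'a::field ^ 'n \<Rightarrow> 'a ^ 'n \<Rightarrow> 'a" assumes bil: "bilinear_form Q"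
begin
lemma add1: "Q (x+y) z = Q x z + Q y z" using bil by (simp add: bilinear_form_def)
lemma add2: "Q x (y+z) = Q x y + Q x z" using bil by (simp add: bilinear_form_def)
lemma sc1: "Q (c *s x) y = c * Q x y" using bil by (simp add: bilinear_form_def)
lemma sc2: "Q x (c *s y) = c * Q x y" using bil by (simp add: bilinear_form_def)
lemma zero1: "Q 0 y = 0" using sc1[of 0 0 y] by simp
lemma zero2: "Q y 0 = 0" using sc2[of y 0 0] by simp
lemma diff1: "Q (x - y) z = Q x z - Q y z" using add1[of "x-y" y z] by (simp add: algebra_simps)
lemma diff2: "Q z (x - y) = Q z x - Q z y" using add2[of z "x-y" y] by (simp add: algebra_simps)
lemma sum1: "Q (sum f A) y = (\<Sum>a\<in>A. Q (f a) y)"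
  by (induction A rule: infinite_finite_induct) (auto simp: zero1 add1)
lemma sum2: "Q y (sum f A) = (\<Sum>a\<in>A. Q y (f a))"
  by (induction A rule: infinite_finite_induct) (auto simp: zero2 add2)
lemma lsum1: "Q (\<Sum>j\<in>A. c j *s v j) y = (\<Sum>j\<in>A. c j * Q (v j) y)"
  by (simp add: sum1 sc1)
lemma lsum2: "Q y (\<Sum>j\<in>A. c j *s v j) = (\<Sum>j\<in>A. c j * Q y (v j))"
  by (simp add: sum2 sc2)
end

lemma sum_delta_mult: "(m::nat) < k \<Longrightarrow> (\<Sum>j<k. c j * (if j = m then 1 else 0)) = (c m :: 'a::comm_ring_1)"
  by (simp add: if_distrib cong: if_cong)
lemma sum_delta_mult': "(m::nat) < k \<Longrightarrow> (\<Sum>j<k. c j * (if m = j then 1 else 0)) = (c m :: 'a::comm_ring_1)"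
  by (simp add: if_distrib cong: if_cong)

lemma span_rep:
  assumes "y \<in> vec.span (w ` {..<(k::nat)})"
  shows "\<exists>c. y = (\<Sum>j<k. c j *s w j)"
  using assms
proof (induction rule: vec.span_induct_alt)
  case base
  show ?case by (rule exI[of _ "\<lambda>_. 0"]) simp
next
  case (step c x y)
  then obtain m where m: "m < k" "x = w m" by auto
  from step obtain d where d: "y = (\<Sum>j<k. d j *s w j)" by auto
  have "c *s x + y = (\<Sum>j<k. (if j = m then c else 0) *s w j) + (\<Sum>j<k. d j *s w j)"
  proof -
    have "(\<Sum>j<k. (if j = m then c else 0) *s w j) = (\<Sum>j<k. if j = m then c *s w j else 0)"
      by (rule sum.cong) auto
    also have "\<dots> = c *s w m" using m by simp
    finally show ?thesis using m d by simp
  qed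
  also have "\<dots> = (\<Sum>j<k. ((if j = m then c else 0) + d j) *s w j)"
    by (simp add: sum.distrib vector_sadd_rdistrib)
  finally have E: "c *s x + y = (\<Sum>j<k. ((if j = m then c else 0) + d j) *s w j)" .
  show ?case by (rule exI[of _ "\<lambda>j. (if j = m then c else 0) + d j"]) (rule E)
qed



lemma ds3I:
  assumes "A \<subseteq> S" "B \<subseteq> S" "C \<subseteq> S"
    and ex: "\<And>v. v \<in> S \<Longrightarrow> \<exists>a b c. a \<in> A \<and> b \<in> B \<and> c \<in> C \<and> v = a + b + c"
    and un: "\<And>a b c a' b' c'. a \<in> A \<Longrightarrow> b \<in> B \<Longrightarrow> c \<in> C \<Longrightarrow> a' \<in> A \<Longrightarrow> b' \<in> B \<Longrightarrow> c' \<in> C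
       \<Longrightarrow> a + b + c = a' + b' + c' \<Longrightarrow> a = a' \<and> b = b' \<and> c = c'"
  shows "direct_sum3 S A B C"
  unfolding direct_sum3_def
proof (intro conjI assms ballI)
  fix v assume v: "v \<in> S"
  then obtain a b c where abc: "a \<in> A" "b \<in> B" "c \<in> C" "v = a + b + c" using ex by blast
  show "\<exists>!(a, b, c). a \<in> A \<and> b \<in> B \<and> c \<in> C \<and> v = a + b + c"
  proof (rule ex1I[of _ "(a, b, c)"])
    show "case (a, b, c) of (a, b, c) \<Rightarrow> a \<in> A \<and> b \<in> B \<and> c \<in> C \<and> v = a + b + c" using abc by simp
  next
    fix p assume h: "case p of (a, b, c) \<Rightarrow> a \<in> A \<and> b \<in> B \<and> c \<in> C \<and> v = a + b + c"
    obtain a' b' c' where p: "p = (a', b', c')" by (rule prod_cases3)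
    have h': "a' \<in> A" "b' \<in> B" "c' \<in> C" "v = a' + b' + c'" using h p by simp_all
    have e: "a' + b' + c' = a + b + c" using h'(4) abc(4) by simp
    have "a' = a \<and> b' = b \<and> c' = c" by (rule un[OF h'(1-3) abc(1-3) e])
    then show "p = (a, b, c)" using p by simp
  qed
qed

lemma ds2I:
  assumes "A \<subseteq> S" "B \<subseteq> S"
    and ex: "\<And>v. v \<in> S \<Longrightarrow> \<exists>a b. a \<in> A \<and> b \<in> B \<and> v = a + b"
    and un: "\<And>a b a' b'. a \<in> A \<Longrightarrow> b \<in> B \<Longrightarrow> a' \<in> A \<Longrightarrow> b' \<in> B
       \<Longrightarrow> a + b = a' + b' \<Longrightarrow> a = a' \<and> b = b'"
  shows "direct_sum2 S A B"
  unfolding direct_sum2_def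
proof (intro conjI assms ballI)
  fix v assume v: "v \<in> S"
  then obtain a b where ab: "a \<in> A" "b \<in> B" "v = a + b" using ex by blast
  show "\<exists>!p. fst p \<in> A \<and> snd p \<in> B \<and> v = fst p + snd p"
  proof (rule ex1I[of _ "(a, b)"])
    show "fst (a, b) \<in> A \<and> snd (a, b) \<in> B \<and> v = fst (a, b) + snd (a, b)" using ab by simp
  next
    fix p assume h: "fst p \<in> A \<and> snd p \<in> B \<and> v = fst p + snd p"
    have e: "fst p + snd p = a + b" using h ab(3) by simp
    have "fst p = a \<and> snd p = b" using un[of "fst p" "snd p" a b] h ab e by blast
    then show "p = (a, b)" by (simp add: prod_eq_iff)
  qed
qed

locale fs =
  fixes Q :: "'a::field ^ 'n \<Rightarrow> 'a ^ 'n \<Rightarrow> 'a" and Dpp :: "('a ^ 'n) set"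
    and L :: "nat \<Rightarrow> ('a ^ 'n) set" and n s :: nat
  assumes bil: "bilinear_form Q" and sym: "symmetric_form Q"
    and two: "(2::'a) \<noteq> 0"
    and Dsub: "vec.subspace Dpp" and iso: "isotropic Q Dpp" and Ddim: "vec.dim Dpp = s"
    and Lsub: "\<forall>i\<le>n. vec.subspace (L i)" and L0: "L 0 = {0}" and Ln: "L n = UNIV"
    and Lmono: "\<forall>i<n. L i \<subseteq> L (Suc i)"
    and Lperp: "\<forall>i j. i + j = n \<longrightarrow> L i = orth_compl Q (L j)"
begin

lemmas Qs = add1[OF bil] add2[OF bil] sc1[OF bil] sc2[OF bil] diff1[OF bil] diff2[OF bil]
  lsum1[OF bil] lsum2[OF bil] zero1[OF bil] zero2[OF bil]

lemma symQ: "Q x y = Q y x" using sym by (simp add: symmetric_form_def)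
lemma isoQ: "x \<in> Dpp \<Longrightarrow> y \<in> Dpp \<Longrightarrow> Q x y = 0"
  using iso by (auto simp: isotropic_def orth_compl_def)
lemma mono: "i \<le> j \<Longrightarrow> j \<le> n \<Longrightarrow> L i \<subseteq> L j"
proof (induction j)
  case 0 then show ?case by simp
next
  case (Suc j)
  show ?case
  proof (cases "i = Suc j")
    case False
    then have "L i \<subseteq> L j" using Suc by simp
    also have "L j \<subseteq> L (Suc j)" using Lmono Suc.prems by simp
    finally show ?thesis .
  qed simp
qed
lemma perpeq: "i + j = n \<Longrightarrow> L i = orth_compl Q (L j)" using Lperp by blast
lemma perp: "i + j = n \<Longrightarrow> x \<in> L i \<Longrightarrow> y \<in> L j \<Longrightarrow> Q x y = 0"
proof -
  assume "i + j = n" "x \<in> L i" "y \<in> L j"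
  then have "x \<in> orth_compl Q (L j)" using perpeq by blast
  then show ?thesis using \<open>y \<in> L j\<close> by (simp add: orth_compl_def)
qed
lemma LS: "i \<le> n \<Longrightarrow> vec.subspace (L i)" using Lsub by simp

definition good :: "nat \<Rightarrow> (nat \<Rightarrow> 'a^'n) \<Rightarrow> (nat \<Rightarrow> 'a^'n) \<Rightarrow> bool" where
 "good k z w \<longleftrightarrow> (\<forall>j<k. z j \<in> Dpp) \<and>
   (\<forall>i<k. \<forall>j<k. Q (z i) (w j) = (if i = j then 1 else 0) \<and> Q (w i) (w j) = 0) \<and>
   (\<forall>i\<le>n. \<forall>v\<in>L i. \<forall>j<k. (Q v (w j) \<noteq> 0 \<longrightarrow> z j \<in> L i) \<and> (Q v (z j) \<noteq> 0 \<longrightarrow> w j \<in> L i))"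

lemma proj_in_L:
  assumes g: "good k z w" and i: "i \<le> n" and v: "v \<in> L i"
  shows "(\<Sum>j<k. Q v (w j) *s z j) \<in> L i" "(\<Sum>j<k. Q v (z j) *s w j) \<in> L i"
proof -
  have S: "vec.subspace (L i)" using Lsub i by simp
  show "(\<Sum>j<k. Q v (w j) *s z j) \<in> L i"
  proof (rule vec.subspace_sum[OF S])
    fix j assume j: "j \<in> {..<k}"
    show "Q v (w j) *s z j \<in> L i"
    proof (cases "Q v (w j) = 0")
      case True then show ?thesis using vec.subspace_0[OF S] by simp
    next
      case False then have "z j \<in> L i" using g i v j by (auto simp: good_def)
      then show ?thesis by (rule vec.subspace_scale[OF S])
    qed
  qed
  show "(\<Sum>j<k. Q v (z j) *s w j) \<in> L i"
  proof (rule vec.subspace_sum[OF S])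
    fix j assume j: "j \<in> {..<k}"
    show "Q v (z j) *s w j \<in> L i"
    proof (cases "Q v (z j) = 0")
      case True then show ?thesis using vec.subspace_0[OF S] by simp
    next
      case False then have "w j \<in> L i" using g i v j by (auto simp: good_def)
      then show ?thesis by (rule vec.subspace_scale[OF S])
    qed
  qed
qed


context
  fixes k z w assumes g: "good k z w"
begin
lemma g_zD: "j < k \<Longrightarrow> z j \<in> Dpp" using g by (auto simp: good_def)
lemma g_zw: "i<k \<Longrightarrow> j<k \<Longrightarrow> Q (z i) (w j) = (if i = j then 1 else 0)"
  using g by (auto simp: good_def)
lemma g_ww: "i<k \<Longrightarrow> j<k \<Longrightarrow> Q (w i) (w j) = 0" using g by (auto simp: good_def)
lemma g_zz: "i<k \<Longrightarrow> j<k \<Longrightarrow> Q (z i) (z j) = 0" using g_zD isoQ by blast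
lemma g_wz: "i<k \<Longrightarrow> j<k \<Longrightarrow> Q (w i) (z j) = (if j = i then 1 else 0)"
  using g_zw[of j i] symQ[of "w i" "z j"] by simp
lemma g_S1: "m<k \<Longrightarrow> (\<Sum>j<k. c j * Q (z j) (w m)) = c m"
proof -
  assume m: "m < k"
  have "(\<Sum>j<k. c j * Q (z j) (w m)) = (\<Sum>j<k. c j * (if j = m then 1 else 0))"
    by (rule sum.cong) (auto simp: g_zw m)
  then show ?thesis using m by (simp add: sum_delta_mult)
qed
lemma g_S2: "m<k \<Longrightarrow> (\<Sum>j<k. c j * Q (w j) (z m)) = c m"
proof -
  assume m: "m < k"
  have "(\<Sum>j<k. c j * Q (w j) (z m)) = (\<Sum>j<k. c j * (if m = j then 1 else 0))"
    by (rule sum.cong) (auto simp: g_wz m)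
  then show ?thesis using m by (simp add: sum_delta_mult')
qed
lemma g_S3: "m<k \<Longrightarrow> (\<Sum>j<k. c j * Q (z j) (z m)) = 0"
  by (rule sum.neutral) (auto simp: g_zz)
lemma g_S4: "m<k \<Longrightarrow> (\<Sum>j<k. c j * Q (w j) (w m)) = 0"
  by (rule sum.neutral) (auto simp: g_ww)
end

lemma step:
  assumes g: "good k z w" and ks: "k < s"
  shows "\<exists>z' w'. good (Suc k) z' w'"
proof -
  note zD = g_zD[OF g] and zw = g_zw[OF g] and ww = g_ww[OF g] and zz = g_zz[OF g]
    and wz = g_wz[OF g] and S1 = g_S1[OF g] and S2 = g_S2[OF g] and S3 = g_S3[OF g] and S4 = g_S4[OF g]
  have "\<not> Dpp \<subseteq> vec.span (z ` {..<k})"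
  proof
    assume "Dpp \<subseteq> vec.span (z ` {..<k})"
    then have "vec.dim Dpp \<le> card (z ` {..<k})" by (rule vec.dim_le_card) simp
    also have "\<dots> \<le> k" using card_image_le[of "{..<k}" z] by simp
    finally show False using Ddim ks by simp
  qed
  then obtain z0 where z0: "z0 \<in> Dpp" "z0 \<notin> vec.span (z ` {..<k})" by blast
  define zk where "zk = z0 - (\<Sum>j<k. Q z0 (w j) *s z j)"
  have zkD: "zk \<in> Dpp" unfolding zk_def
    by (intro vec.subspace_diff[OF Dsub] z0 vec.subspace_sum[OF Dsub] vec.subspace_scale[OF Dsub] zD) auto
  have zk0: "zk \<noteq> 0"
  proof
    assume "zk = 0"
    then have "z0 = (\<Sum>j<k. Q z0 (w j) *s z j)" unfolding zk_def by simp
    moreover have "(\<Sum>j<k. Q z0 (w j) *s z j) \<in> vec.span (z ` {..<k})"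
      by (intro vec.span_sum vec.span_scale vec.span_base) auto
    ultimately show False using z0 by simp
  qed
  have zkw: "Q zk (w m) = 0" if "m < k" for m
    using that by (simp add: zk_def Qs S1)
  have zkz: "Q zk (z m) = 0" if "m < k" for m
    using that zkD zD isoQ by blast
  have zkzk: "Q zk zk = 0" using zkD isoQ by blast
  define a where "a = (LEAST a. zk \<in> L a)"
  have zkn: "zk \<in> L n" using Ln by simp
  have za: "zk \<in> L a" unfolding a_def by (rule LeastI[of _ n]) (rule zkn)
  have an: "a \<le> n" unfolding a_def by (rule Least_le) (rule zkn)
  have a0: "a \<noteq> 0"
  proof
    assume "a = 0"
    then have "zk \<in> L 0" using za by simp
    then show False using L0 zk0 by simp
  qed
  have lt: "a - 1 < a" using a0 by simp
  have nza: "zk \<notin> L (a - 1)"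
    using not_less_Least[of "a - 1" "\<lambda>a. zk \<in> L a"] lt unfolding a_def by blast
  define b where "b = n - (a - 1)"
  have bn: "b \<le> n" "1 \<le> b" using an a0 by (auto simp: b_def)
  have "(a - 1) + b = n" using an a0 by (simp add: b_def)
  then have Lab: "L (a - 1) = orth_compl Q (L b)" using Lperp by blast
  then have "zk \<notin> orth_compl Q (L b)" using nza by simp
  then obtain v where v: "v \<in> L b" "Q zk v \<noteq> 0" unfolding orth_compl_def by blast
  define v' where "v' = v - (\<Sum>j<k. Q v (w j) *s z j) - (\<Sum>j<k. Q v (z j) *s w j)"
  have v'L: "v' \<in> L b" using proj_in_L[OF g bn(1) v(1)] LS[OF bn(1)] v(1)
    by (simp add: v'_def vec.subspace_diff)
  have v'z: "Q v' (z m) = 0" if "m<k" for m using that by (simp add: v'_def Qs S2 S3)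
  have v'w: "Q v' (w m) = 0" if "m<k" for m using that by (simp add: v'_def Qs S1 S4)
  have zkv': "Q zk v' = Q zk v"
  proof -
    have A: "(\<Sum>j<k. c j * Q (z j) zk) = 0" for c
      by (rule sum.neutral) (use zkz[unfolded symQ[of zk]] in auto)
    have B: "(\<Sum>j<k. c j * Q (w j) zk) = 0" for c
      by (rule sum.neutral) (use zkw[unfolded symQ[of zk]] in auto)
    have "Q v' zk = Q v zk" by (simp add: v'_def Qs A B)
    then show ?thesis using symQ[of zk v'] symQ[of zk v] by simp
  qed
  define w1 where "w1 = (1 / Q zk v') *s v'"
  have w1L: "w1 \<in> L b" unfolding w1_def using LS[OF bn(1)] v'L by (rule vec.subspace_scale)
  have zkw1: "Q zk w1 = 1" using v(2) zkv' by (simp add: w1_def Qs)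
  have w1z: "Q w1 (z m) = 0" if "m<k" for m using that v'z by (simp add: w1_def Qs)
  have w1w: "Q w1 (w m) = 0" if "m<k" for m using that v'w by (simp add: w1_def Qs)
  define c where "c = Q w1 w1 / 2"
  define wk where "wk = w1 - c *s zk"
  have wkL: "wk \<in> L b"
  proof (cases "a \<le> b")
    case True
    then have "zk \<in> L b" using mono[OF True bn(1)] za by blast
    then show ?thesis unfolding wk_def using LS[OF bn(1)] w1L
      by (simp add: vec.subspace_diff vec.subspace_scale)
  next
    case False
    then have "b \<le> n - b" using an a0 by (simp add: b_def)
    then have "w1 \<in> L (n - b)" using mono[of b "n - b"] w1L by auto
    then have "Q w1 w1 = 0" using perp[of "n - b" b w1 w1] w1L bn by simp
    then show ?thesis using w1L by (simp add: wk_def c_def)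
  qed
  have zkwk: "Q zk wk = 1" using zkw1 zkzk by (simp add: wk_def Qs)
  have wkzk: "Q wk zk = 1" using zkwk symQ[of zk wk] by simp
  have w1zk: "Q w1 zk = 1" using zkw1 symQ[of zk w1] by simp
  have wkwk: "Q wk wk = 0"
  proof -
    have "Q wk wk = Q w1 w1 - c * Q w1 zk - c * Q zk wk"
      by (simp add: wk_def Qs algebra_simps)
    also have "\<dots> = Q w1 w1 - 2 * c" using w1zk zkwk by simp
    also have "\<dots> = 0" using two by (simp add: c_def)
    finally show ?thesis .
  qed
  have wkz: "Q wk (z m) = 0" if "m<k" for m using that w1z zkz by (simp add: wk_def Qs)
  have wkw: "Q wk (w m) = 0" if "m<k" for m using that w1w zkw by (simp add: wk_def Qs)
  have split1: "zk \<in> L i" if "i \<le> n" "u \<in> L i" "Q u wk \<noteq> 0" for i u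
  proof (rule ccontr)
    assume "zk \<notin> L i"
    then have "\<not> a \<le> i" using mono[of a i] za that(1) by auto
    then have "i \<le> a - 1" by simp
    then have "L i \<subseteq> L (a - 1)" using an by (intro mono) auto
    then have "u \<in> L (a - 1)" using that(2) by blast
    then have "Q u wk = 0" using perp[of "a - 1" b u wk] wkL an a0 by (simp add: b_def)
    then show False using that(3) by simp
  qed
  have split2: "wk \<in> L i" if "i \<le> n" "u \<in> L i" "Q u zk \<noteq> 0" for i u
  proof (rule ccontr)
    assume "wk \<notin> L i"
    then have "\<not> b \<le> i" using mono[of b i] wkL that(1) by auto
    then have "i \<le> n - a" by (simp add: b_def)
    then have "L i \<subseteq> L (n - a)" by (intro mono) auto
    then have "u \<in> L (n - a)" using that(2) by blast
    then have "Q zk u = 0" using perp[of a "n - a" zk u] za an by simp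
    then show False using that(3) symQ[of zk u] by simp
  qed
  define z' where "z' = z(k := zk)"
  define w' where "w' = w(k := wk)"
  have "good (Suc k) z' w'"
    unfolding good_def
  proof (intro conjI allI impI ballI)
    fix j assume "j < Suc k" then show "z' j \<in> Dpp"
      by (auto simp: z'_def less_Suc_eq zD zkD)
  next
    fix i j assume "i < Suc k" "j < Suc k"
    then show "Q (z' i) (w' j) = (if i = j then 1 else 0)"
      using zw zkw zkwk wkz[unfolded symQ[of wk]] by (auto simp: z'_def w'_def less_Suc_eq)
  next
    fix i j assume "i < Suc k" "j < Suc k"
    then show "Q (w' i) (w' j) = 0"
      using ww wkw wkwk wkw[unfolded symQ[of wk]] by (auto simp: w'_def less_Suc_eq)
  next
    fix i v j assume "i \<le> n" "v \<in> L i" "j < Suc k" "Q v (w' j) \<noteq> 0"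
    then show "z' j \<in> L i" using g split1
      by (auto simp: z'_def w'_def less_Suc_eq good_def)
  next
    fix i v j assume "i \<le> n" "v \<in> L i" "j < Suc k" "Q v (z' j) \<noteq> 0"
    then show "w' j \<in> L i" using g split2
      by (auto simp: z'_def w'_def less_Suc_eq good_def)
  qed
  then show ?thesis by blast
qed

lemma good_exists: "k \<le> s \<Longrightarrow> \<exists>z w. good k z w"
proof (induction k)
  case 0 then show ?case by (auto simp: good_def)
next
  case (Suc k)
  then obtain z w where "good k z w" by auto
  then show ?case using step Suc.prems by simp
qed


lemma final:
  assumes g: "good s z w"
  shows "\<exists>T W. vec.subspace T \<and> vec.subspace W \<and>
     direct_sum3 UNIV Dpp T W \<and>
     direct_sum2 (orth_compl Q Dpp) Dpp T \<and>
     isotropic Q W \<and> orthogonal_sets Q T W \<and>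
     (\<exists>z w :: nat \<Rightarrow> 'a ^ 'n.
        inj_on z {..<s} \<and> vec.independent (z ` {..<s}) \<and> vec.span (z ` {..<s}) = Dpp \<and>
        inj_on w {..<s} \<and> vec.independent (w ` {..<s}) \<and> vec.span (w ` {..<s}) = W \<and>
        (\<forall>i<s. \<forall>j<s. Q (z i) (w j) = (if i = j then 1 else 0))) \<and>
     (\<forall>i. 1 \<le> i \<and> i \<le> n - 1 \<longrightarrow>
        direct_sum3 (L i) (L i \<inter> Dpp) (L i \<inter> T) (L i \<inter> W))"
proof -
  note zD = g_zD[OF g] and zw = g_zw[OF g] and ww = g_ww[OF g] and zz = g_zz[OF g]
    and wz = g_wz[OF g] and S1 = g_S1[OF g] and S2 = g_S2[OF g] and S3 = g_S3[OF g] and S4 = g_S4[OF g]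
  have injz: "inj_on z {..<s}"
  proof (rule inj_onI)
    fix i j assume ij: "i \<in> {..<s}" "j \<in> {..<s}" "z i = z j"
    have 1: "Q (z i) (w i) = 1" using zw[of i i] ij by simp
    have 2: "Q (z j) (w i) = (if j = i then 1 else 0)" using zw[of j i] ij by simp
    show "i = j" using 1 2 ij(3) by (metis zero_neq_one)
  qed
  have injw: "inj_on w {..<s}"
  proof (rule inj_onI)
    fix i j assume ij: "i \<in> {..<s}" "j \<in> {..<s}" "w i = w j"
    have 1: "Q (z i) (w i) = 1" using zw[of i i] ij by simp
    have 2: "Q (z i) (w j) = (if i = j then 1 else 0)" using zw[of i j] ij by simp
    show "i = j" using 1 2 ij(3) by (metis zero_neq_one)
  qed
  have indz: "vec.independent (z ` {..<s})"
    unfolding vec.independent_explicit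
  proof (intro conjI allI impI ballI)
    fix c v assume c: "(\<Sum>v\<in>z ` {..<s}. c v *s v) = 0" and v: "v \<in> z ` {..<s}"
    then obtain m where m: "m < s" "v = z m" by auto
    have "(\<Sum>j<s. c (z j) *s z j) = 0" using c by (simp add: sum.reindex[OF injz])
    then have "Q (\<Sum>j<s. c (z j) *s z j) (w m) = 0" by (simp add: Qs)
    then have "c (z m) = 0" unfolding lsum1[OF bil] using S1[OF m(1)] by simp
    then show "c v = 0" using m by simp
  qed simp
  have indw: "vec.independent (w ` {..<s})"
    unfolding vec.independent_explicit
  proof (intro conjI allI impI ballI)
    fix c v assume c: "(\<Sum>v\<in>w ` {..<s}. c v *s v) = 0" and v: "v \<in> w ` {..<s}"
    then obtain m where m: "m < s" "v = w m" by auto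
    have "(\<Sum>j<s. c (w j) *s w j) = 0" using c by (simp add: sum.reindex[OF injw])
    then have "Q (\<Sum>j<s. c (w j) *s w j) (z m) = 0" by (simp add: Qs)
    then have "c (w m) = 0" unfolding lsum1[OF bil] using S2[OF m(1)] by simp
    then show "c v = 0" using m by simp
  qed simp
  have spz: "vec.span (z ` {..<s}) = Dpp"
  proof -
    have sub: "z ` {..<s} \<subseteq> Dpp" using zD by auto
    have "vec.dim (z ` {..<s}) = s"
      using vec.dim_eq_card_independent[OF indz] card_image[OF injz] by simp
    then have "vec.span (z ` {..<s}) = vec.span Dpp" using Ddim by (intro vec.dim_eq_span sub) simp
    then show ?thesis using Dsub by simp
  qed
  define T where "T = {x. \<forall>j<s. Q x (z j) = 0 \<and> Q x (w j) = 0}"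
  define W where "W = vec.span (w ` {..<s})"
  have Tsub: "vec.subspace T" unfolding vec.subspace_def T_def by (simp add: Qs)
  have Wsub: "vec.subspace W" unfolding W_def by simp
  have repD: "y \<in> Dpp \<Longrightarrow> \<exists>c. y = (\<Sum>j<s. c j *s z j)" for y
    using span_rep[of y z s] spz by simp
  have repW: "y \<in> W \<Longrightarrow> \<exists>c. y = (\<Sum>j<s. c j *s w j)" for y
    using span_rep[of y w s] W_def by simp
  define pz where "pz x = (\<Sum>j<s. Q x (w j) *s z j)" for x
  define pw where "pw x = (\<Sum>j<s. Q x (z j) *s w j)" for x
  have pzD: "pz x \<in> Dpp" for x unfolding pz_def
    by (intro vec.subspace_sum[OF Dsub] vec.subspace_scale[OF Dsub] zD) auto
  have pwW: "pw x \<in> W" for x unfolding pw_def W_def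
    by (intro vec.span_sum vec.span_scale vec.span_base) auto
  have ptT: "x - pz x - pw x \<in> T" for x
    unfolding T_def by (auto simp: pz_def pw_def Qs S1 S2 S3 S4)
  have Wz: "Q y (z m) = c m" if "y = (\<Sum>j<s. c j *s w j)" "m < s" for y c m
    using that by (simp add: Qs S2)
  have Ww: "Q y (w m) = 0" if yW: "y \<in> W" and m: "m < s" for y m
  proof -
    obtain c where "y = (\<Sum>j<s. c j *s w j)" using repW yW by blast
    then show ?thesis using m by (simp add: Qs S4)
  qed
  have Dw: "Q y (w m) = c m" if "y = (\<Sum>j<s. c j *s z j)" "m < s" for y c m
    using that by (simp add: Qs S1)
  have Dz: "Q y (z m) = 0" if "y \<in> Dpp" "m < s" for y m
    using that zD isoQ by blast
  have key: "pz (a + t + y) = a \<and> pw (a + t + y) = y" if aD: "a \<in> Dpp" and tT: "t \<in> T" and yW: "y \<in> W" for a t y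
  proof -
    obtain c where c: "a = (\<Sum>j<s. c j *s z j)" using repD aD by blast
    obtain d where d: "y = (\<Sum>j<s. d j *s w j)" using repW yW by blast
    have 1: "Q (a + t + y) (w m) = c m" if "m < s" for m
      using Dw[OF c that] Ww[OF \<open>y \<in> W\<close> that] \<open>t \<in> T\<close> that by (simp add: Qs T_def)
    have 2: "Q (a + t + y) (z m) = d m" if "m < s" for m
      using Dz[OF \<open>a \<in> Dpp\<close> that] Wz[OF d that] \<open>t \<in> T\<close> that by (simp add: Qs T_def)
    have "pz (a + t + y) = (\<Sum>j<s. c j *s z j)" unfolding pz_def by (rule sum.cong) (auto simp: 1)
    moreover have "pw (a + t + y) = (\<Sum>j<s. d j *s w j)" unfolding pw_def by (rule sum.cong) (auto simp: 2)
    ultimately show ?thesis using c d by simp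
  qed
  have uniq: "a = a' \<and> t = t' \<and> y = y'" if h: "a \<in> Dpp" "t \<in> T" "y \<in> W" "a' \<in> Dpp" "t' \<in> T" "y' \<in> W"
     and e: "a + t + y = a' + t' + y'" for a t y a' t' y'
  proof -
    have k1: "pz (a + t + y) = a \<and> pw (a + t + y) = y" by (rule key[OF h(1-3)])
    have k2: "pz (a' + t' + y') = a' \<and> pw (a' + t' + y') = y'" by (rule key[OF h(4-6)])
    have "a = a'" "y = y'" using k1 k2 e by simp_all
    then show ?thesis using e by simp
  qed
  have ds3: "direct_sum3 UNIV Dpp T W"
  proof (rule ds3I)
    fix v :: "'a^'n"
    show "\<exists>a b c. a \<in> Dpp \<and> b \<in> T \<and> c \<in> W \<and> v = a + b + c"
      using pzD[of v] ptT[of v] pwW[of v] by (intro exI[of _ "pz v"] exI[of _ "v - pz v - pw v"] exI[of _ "pw v"]) auto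
  next
    fix a b c a' b' c' assume "a \<in> Dpp" "b \<in> T" "c \<in> W" "a' \<in> Dpp" "b' \<in> T" "c' \<in> W" "a + b + c = a' + b' + c'"
    then show "a = a' \<and> b = b' \<and> c = c'" by (rule uniq)
  qed simp_all
  have TD: "Q t y = 0" if tT: "t \<in> T" and yD: "y \<in> Dpp" for t y
  proof -
    obtain c where "y = (\<Sum>j<s. c j *s z j)" using repD yD by blast
    then have "Q t y = (\<Sum>j<s. c j * Q t (z j))" by (simp add: Qs)
    also have "\<dots> = 0" using tT by (intro sum.neutral) (auto simp: T_def)
    finally show ?thesis .
  qed
  have TW: "Q t y = 0" if tT: "t \<in> T" and yW: "y \<in> W" for t y
  proof -
    obtain c where "y = (\<Sum>j<s. c j *s w j)" using repW yW by blast
    then have "Q t y = (\<Sum>j<s. c j * Q t (w j))" by (simp add: Qs)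
    also have "\<dots> = 0" using tT by (intro sum.neutral) (auto simp: T_def)
    finally show ?thesis .
  qed
  have WW: "Q x y = 0" if xW: "x \<in> W" and yW: "y \<in> W" for x y
  proof -
    obtain c where "x = (\<Sum>j<s. c j *s w j)" using repW xW by blast
    then have "Q x y = (\<Sum>j<s. c j * Q (w j) y)" by (simp add: Qs)
    also have "\<dots> = 0"
    proof (intro sum.neutral ballI)
      fix j assume "j \<in> {..<s}"
      then have "Q y (w j) = 0" using Ww yW by simp
      then show "c j * Q (w j) y = 0" using symQ[of y "w j"] by simp
    qed
    finally show ?thesis .
  qed
  have ds2: "direct_sum2 (orth_compl Q Dpp) Dpp T"
  proof (rule ds2I)
    show "Dpp \<subseteq> orth_compl Q Dpp" using iso by (simp add: isotropic_def)
    show "T \<subseteq> orth_compl Q Dpp" using TD by (auto simp: orth_compl_def)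
  next
    fix v assume v: "v \<in> orth_compl Q Dpp"
    have "pw v = 0" unfolding pw_def
      using v zD by (intro sum.neutral) (auto simp: orth_compl_def)
    then show "\<exists>a b. a \<in> Dpp \<and> b \<in> T \<and> v = a + b"
      using pzD[of v] ptT[of v] by (intro exI[of _ "pz v"] exI[of _ "v - pz v"]) auto
  next
    fix a b a' b' assume "a \<in> Dpp" "b \<in> T" "a' \<in> Dpp" "b' \<in> T" "a + b = a' + b'"
    moreover have "(0::'a^'n) \<in> W" using Wsub by (rule vec.subspace_0)
    ultimately show "a = a' \<and> b = b'" using uniq[of a b 0 a' b' 0] by simp
  qed
  have flag: "direct_sum3 (L i) (L i \<inter> Dpp) (L i \<inter> T) (L i \<inter> W)" if "1 \<le> i \<and> i \<le> n - 1" for i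
  proof (rule ds3I)
    have i: "i \<le> n" using that by arith
    fix v assume v: "v \<in> L i"
    have 1: "pz v \<in> L i" "pw v \<in> L i" using proj_in_L[OF g i v] by (simp_all add: pz_def pw_def)
    have 2: "v - pz v - pw v \<in> L i" using 1 v LS[OF i] by (simp add: vec.subspace_diff)
    show "\<exists>a b c. a \<in> L i \<inter> Dpp \<and> b \<in> L i \<inter> T \<and> c \<in> L i \<inter> W \<and> v = a + b + c"
      using pzD[of v] ptT[of v] pwW[of v] 1 2
      by (intro exI[of _ "pz v"] exI[of _ "v - pz v - pw v"] exI[of _ "pw v"]) auto
  next
    fix a b c a' b' c' assume "a \<in> L i \<inter> Dpp" "b \<in> L i \<inter> T" "c \<in> L i \<inter> W" "a' \<in> L i \<inter> Dpp" "b' \<in> L i \<inter> T" "c' \<in> L i \<inter> W" "a + b + c = a' + b' + c'"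
    then show "a = a' \<and> b = b' \<and> c = c'" using uniq[of a b c a' b' c'] by blast
  qed auto
  have isoW: "isotropic Q W" unfolding isotropic_def orth_compl_def using WW by blast
  have orthTW: "orthogonal_sets Q T W" unfolding orthogonal_sets_def using TW by blast
  have spw: "vec.span (w ` {..<s}) = W" by (simp add: W_def)
  have ex: "\<exists>z w :: nat \<Rightarrow> 'a ^ 'n.
        inj_on z {..<s} \<and> vec.independent (z ` {..<s}) \<and> vec.span (z ` {..<s}) = Dpp \<and>
        inj_on w {..<s} \<and> vec.independent (w ` {..<s}) \<and> vec.span (w ` {..<s}) = W \<and>
        (\<forall>i<s. \<forall>j<s. Q (z i) (w j) = (if i = j then 1 else 0))"
    by (intro exI[of _ z] exI[of _ w] conjI injz indz spz injw indw spw allI impI zw)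
  have fl: "\<forall>i. 1 \<le> i \<and> i \<le> n - 1 \<longrightarrow>
        direct_sum3 (L i) (L i \<inter> Dpp) (L i \<inter> T) (L i \<inter> W)"
    using flag by blast
  show ?thesis
    by (intro exI[of _ T] exI[of _ W] conjI Tsub Wsub ds3 ds2 isoW orthTW ex fl)
qed

end

theorem mainTheorem12:
  fixes Q :: "'a::{field,finite} ^ 'n \<Rightarrow> 'a ^ 'n \<Rightarrow> 'a"
    and Dpp :: "('a ^ 'n) set"
    and L :: "nat \<Rightarrow> ('a ^ 'n) set"
    and d r s n :: nat
  assumes q_odd: "odd CARD('a)"
    and dimD: "CARD('n) = 2 * d + 1"
    and Q_bil: "bilinear_form Q"
    and Q_sym: "symmetric_form Q"
    and Q_nondeg: "nondegenerate_form Q"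
    and Dpp_sub: "vec.subspace Dpp"
    and Dpp_iso: "isotropic Q Dpp"
    and Dpp_dim: "vec.dim Dpp = s"
    and n_def: "n = 2 * r + 1"
    and L_sub: "\<forall>i\<le>n. vec.subspace (L i)"
    and L_0: "L 0 = {0}"
    and L_n: "L n = UNIV"
    and L_mono: "\<forall>i<n. L i \<subseteq> L (Suc i)"
    and L_perp: "\<forall>i j. i + j = n \<longrightarrow> L i = orth_compl Q (L j)"
  shows "\<exists>T W. vec.subspace T \<and> vec.subspace W \<and>
     direct_sum3 UNIV Dpp T W \<and>
     direct_sum2 (orth_compl Q Dpp) Dpp T \<and>
     isotropic Q W \<and> orthogonal_sets Q T W \<and>
     (\<exists>z w :: nat \<Rightarrow> 'a ^ 'n.
        inj_on z {..<s} \<and> vec.independent (z ` {..<s}) \<and> vec.span (z ` {..<s}) = Dpp \<and>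
        inj_on w {..<s} \<and> vec.independent (w ` {..<s}) \<and> vec.span (w ` {..<s}) = W \<and>
        (\<forall>i<s. \<forall>j<s. Q (z i) (w j) = (if i = j then 1 else 0))) \<and>
     (\<forall>i. 1 \<le> i \<and> i \<le> n - 1 \<longrightarrow>
        direct_sum3 (L i) (L i \<inter> Dpp) (L i \<inter> T) (L i \<inter> W))"
proof -
  interpret fs Q Dpp L n s
    by (rule fs.intro[OF Q_bil Q_sym two_ne0[OF q_odd] Dpp_sub Dpp_iso Dpp_dim L_sub L_0 L_n L_mono L_perp])
  obtain z w where "good s z w" using good_exists by blast
  then show ?thesis by (rule final)
qed

end
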